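(* Let $p=(p_1,p_2,\dots)$ be a probability distribution on $\mathbb{N}$ (possibly of finite support) with $p_1\ge p_2\ge\cdots$ and $p_1\le\frac23$. Let $\pi:\mathbb{N}\times\mathbb{N}\to\mathbb{N}$ be any bijection, and let $\pi p$ denote the probability distribution on $\mathbb{N}\times\mathbb{N}$ given by $(\pi p)(j,k)=p_{\pi(j,k)}$. Then the variation distance between $\pi p$ and $p\otimes p$ (where $(p\otimes p)(j,k)=p_jp_k$) is at least $\frac29$.
   Context: The variation distance between distributions $p,q$ on a countable set is $\frac12\sum_x|p(x)-q(x)|$. *)

theory Defs
  imports "HOL-Analysis.Analysis"
begin

definition var_dist :: "('a \<Rightarrow> real) \<Rightarrow> ('a \<Rightarrow> real) \<Rightarrow> real" where
  "var_dist p q = (1/2) * (\<Sum>\<^sub>\<infinity>x. \<bar>p x - q x\<bar>)"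

definition prob_dist :: "('a \<Rightarrow> real) \<Rightarrow> bool" where
  "prob_dist p \<longleftrightarrow> (\<forall>x. 0 \<le> p x) \<and> (p has_sum 1) UNIV"

end

theory Submission
  imports Defs
begin

lemma tv_lower:
  fixes q r :: "'a \<Rightarrow> real"
  assumes q: "(q has_sum 1) UNIV" and r: "(r has_sum 1) UNIV" and A: "finite A"
  shows "(\<Sum>x\<in>A. q x - r x) \<le> var_dist q r"
proof -
  define d where "d x = q x - r x" for x
  have mr: "((\<lambda>x. - r x) has_sum (-1)) UNIV" by (simp add: has_sum_uminus r)
  have d: "(d has_sum 0) UNIV"
    using has_sum_add[OF q mr] unfolding d_def by simp
  have md: "((\<lambda>x. - d x) has_sum 0) UNIV" by (simp add: has_sum_uminus d)
  have "d summable_on UNIV" using d unfolding summable_on_def by (rule exI)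
  then have "(\<lambda>x. norm (d x)) summable_on UNIV" using summable_on_iff_abs_summable_on_real by blast
  then have ds: "(\<lambda>x. \<bar>d x\<bar>) summable_on UNIV" by simp
  define g where "g x = (if x \<in> A then 2 * d x else 0)" for x
  have g: "(g has_sum (\<Sum>x\<in>A. g x)) UNIV"
    by (rule has_sum_finite_neutralI[OF A]) (auto simp: g_def)
  have f: "((\<lambda>x. g x + - d x) has_sum ((\<Sum>x\<in>A. g x) + 0)) UNIV"
    by (rule has_sum_add[OF g md])
  have le: "g x + - d x \<le> \<bar>d x\<bar>" for x
    unfolding g_def by auto
  have "(\<Sum>x\<in>A. g x) + 0 \<le> infsum (\<lambda>x. \<bar>d x\<bar>) UNIV"
    by (rule has_sum_mono[OF f has_sum_infsum[OF ds]]) (rule le)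
  moreover have "(\<Sum>x\<in>A. g x) = 2 * (\<Sum>x\<in>A. d x)"
    unfolding g_def by (simp add: sum_distrib_left)
  ultimately show ?thesis unfolding var_dist_def d_def by simp
qed

lemma sorted_sum_le:
  fixes p :: "nat \<Rightarrow> real"
  assumes am: "antimono p" and nn: "\<And>x. p x \<ge> 0" and R: "finite R" and c: "card R \<le> m"
  shows "sum p R \<le> sum p {..<m}"
proof -
  have fin: "finite {..<m}" by simp
  have "sum p (R - {..<m}) \<le> (\<Sum>x\<in>R - {..<m}. p m)"
    by (rule sum_mono) (use am in \<open>auto simp: antimono_def\<close>)
  also have "\<dots> = of_nat (card (R - {..<m})) * p m" by simp
  also have "card (R - {..<m}) \<le> card ({..<m} - R)"
  proof -
    have "card R = card (R - {..<m}) + card (R \<inter> {..<m})"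
      using R card_Int_Diff[of R "{..<m}"] by auto
    moreover have "m = card ({..<m} - R) + card (R \<inter> {..<m})"
      using card_Int_Diff[OF fin, of R] by (auto simp: Int_commute)
    ultimately show ?thesis using c by linarith
  qed
  then have "of_nat (card (R - {..<m})) * p m \<le> of_nat (card ({..<m} - R)) * p m"
    using nn[of m] by (intro mult_right_mono) auto
  also have "\<dots> = (\<Sum>x\<in>{..<m} - R. p m)" by simp
  also have "\<dots> \<le> sum p ({..<m} - R)"
    by (rule sum_mono) (use am in \<open>auto simp: antimono_def\<close>)
  finally have *: "sum p (R - {..<m}) \<le> sum p ({..<m} - R)" .
  have "sum p R = sum p (R - {..<m}) + sum p (R \<inter> {..<m})"
    using R by (metis add.commute sum.Int_Diff)
  moreover have "sum p {..<m} = sum p ({..<m} - R) + sum p (R \<inter> {..<m})"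
    using fin by (metis add.commute sum.Int_Diff Int_commute)
  ultimately show ?thesis using * by linarith
qed

theorem lemma3p2:
  fixes p :: "nat \<Rightarrow> real" and \<pi> :: "nat \<times> nat \<Rightarrow> nat"
  assumes "prob_dist p"
    and "antimono p"
    and "p 0 \<le> 2/3"
    and "bij \<pi>"
  shows "var_dist (\<lambda>(j, k). p (\<pi> (j, k))) (\<lambda>(j, k). p j * p k) \<ge> 2/9"
proof -
  have nn: "\<And>x. 0 \<le> p x" and hp: "(p has_sum 1) UNIV"
    using assms(1) unfolding prob_dist_def by auto
  have am: "antimono p" by (rule assms(2))
  define q :: "nat \<times> nat \<Rightarrow> real" where "q = (\<lambda>(j, k). p (\<pi> (j, k)))"
  define r :: "nat \<times> nat \<Rightarrow> real" where "r = (\<lambda>(j, k). p j * p k)"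
  have q_eq: "q = (\<lambda>x. p (\<pi> x))" unfolding q_def by auto
  have bb: "bij_betw \<pi> UNIV UNIV" using assms(4) by (simp add: bij_def)
  have hq: "(q has_sum 1) UNIV"
    unfolding q_eq using has_sum_reindex_bij_betw[OF bb, of p 1] hp by simp
  have inner: "((\<lambda>k. r (j, k)) has_sum p j) UNIV" for j
  proof -
    have "((\<lambda>k. p j * p k) has_sum (p j * 1)) UNIV" by (rule has_sum_cmult_right[OF hp])
    then show ?thesis unfolding r_def by simp
  qed
  have rs: "r summable_on Sigma UNIV (\<lambda>_. UNIV)"
    by (rule summable_on_SigmaI[OF inner]) (use hp nn in \<open>auto simp: summable_on_def r_def\<close>)
  have "(r has_sum 1) (Sigma UNIV (\<lambda>_. UNIV))"
    by (rule has_sum_SigmaI[OF inner hp rs])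
  then have hr: "(r has_sum 1) UNIV" by simp
  define S where "S n = sum p {..<n}" for n
  have "p sums 1" using hp by (rule has_sum_imp_sums)
  then have "S \<longlonglongrightarrow> 1" unfolding sums_def S_def .
  then have "eventually (\<lambda>n. 1/3 < S n) sequentially"
    by (rule order_tendstoD(1)) simp
  then obtain n0 where n0: "1/3 < S n0" by (auto simp: eventually_sequentially)
  define m where "m = (LEAST n. 1/3 \<le> S n)"
  have Sm: "1/3 \<le> S m" unfolding m_def by (rule LeastI[of _ n0]) (use n0 in auto)
  have below: "k < m \<Longrightarrow> S k < 1/3" for k
    unfolding m_def using not_less_Least by force
  have m0: "m \<noteq> 0"
  proof
    assume "m = 0"
    then have "S m = 0" by (simp add: S_def)
    with Sm show False by simp
  qed
  have Sm2: "S m \<le> 2/3"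
  proof (cases "m = 1")
    case True then show ?thesis using assms(3) by (simp add: S_def)
  next
    case False
    then have "1 < m" using m0 by simp
    then have "S 1 < 1/3" by (rule below)
    then have p0: "p 0 < 1/3" by (simp add: S_def)
    obtain k where k: "m = Suc k" using m0 by (cases m) auto
    have "S m = S k + p k" unfolding k S_def by simp
    moreover have "S k < 1/3" using below k by simp
    moreover have "p k \<le> p 0" using am by (auto simp: antimono_def)
    ultimately show ?thesis using p0 by linarith
  qed
  define A where "A = inv \<pi> ` {..<m}"
  have injinv: "inj (inv \<pi>)" using assms(4) bij_imp_bij_inv bij_is_inj by blast
  have finA: "finite A" unfolding A_def by simp
  have cardA: "card A = m" unfolding A_def
    using card_image[OF inj_on_subset[OF injinv]] by simp
  have sq: "sum q A = S m"
  proof -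
    have "sum q A = sum (\<lambda>i. q (inv \<pi> i)) {..<m}"
      unfolding A_def using sum.reindex[OF inj_on_subset[OF injinv], of "{..<m}" q] by (simp add: comp_def)
    also have "\<dots> = S m" unfolding S_def q_eq
      using assms(4) by (simp add: bij_is_surj surj_f_inv_f)
    finally show ?thesis .
  qed
  have sub: "A \<subseteq> fst ` A \<times> snd ` A" by force
  have sr: "sum r A \<le> S m * S m"
  proof -
    have "sum r A \<le> sum r (fst ` A \<times> snd ` A)"
      by (rule sum_mono2) (use finA sub nn in \<open>auto simp: r_def\<close>)
    also have "\<dots> = sum p (fst ` A) * sum p (snd ` A)"
      unfolding r_def sum_product sum.cartesian_product by simp
    also have "\<dots> \<le> S m * S m"
    proof (rule mult_mono)
      show "sum p (fst ` A) \<le> S m" unfolding S_def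
        by (rule sorted_sum_le[OF am nn]) (use finA cardA card_image_le[OF finA, of fst] in auto)
      show "sum p (snd ` A) \<le> S m" unfolding S_def
        by (rule sorted_sum_le[OF am nn]) (use finA cardA card_image_le[OF finA, of snd] in auto)
      show "0 \<le> S m" using Sm by linarith
      show "0 \<le> sum p (snd ` A)" using nn by (simp add: sum_nonneg)
    qed
    finally show ?thesis .
  qed
  have "(\<Sum>x\<in>A. q x - r x) \<le> var_dist q r" by (rule tv_lower[OF hq hr finA])
  moreover have "(\<Sum>x\<in>A. q x - r x) = sum q A - sum r A" by (simp add: sum_subtractf)
  moreover have "0 \<le> (S m - 1/3) * (2/3 - S m)" using Sm Sm2 by simp
  ultimately have "2/9 \<le> var_dist q r" using sq sr by (simp add: algebra_simps)
  then show ?thesis unfolding q_def r_def .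
qed

end
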